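(* Let $B$ be any Boolean algebra, considered as a Boolean metric space with $d(x,y)=x\triangle y$. If $U,V\subset B$ and $f:U\to V$ is an isometry, then there exists $a\in B$ such that the map $F:B\to B$, $F(x)=a\triangle x$, is an isometry of $B$ extending $f$.
   Context: An isometry between Boolean metric spaces is a bijection $f$ with $d(f(x),f(y))=d(x,y)$ for all $x,y$. $\triangle$ is symmetric difference in $B$. *)

theory Defs
  imports Main
begin

definition symdiff :: "'a::boolean_algebra \<Rightarrow> 'a \<Rightarrow> 'a" (infixl "\<triangle>" 65) where
  "x \<triangle> y = sup (x - y) (y - x)"

definition bdist :: "'a::boolean_algebra \<Rightarrow> 'a \<Rightarrow> 'a" where
  "bdist x y = x \<triangle> y"

definition bool_isometry :: "('a::boolean_algebra \<Rightarrow> 'a) \<Rightarrow> 'a set \<Rightarrow> 'a set \<Rightarrow> bool" where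
  "bool_isometry f U V \<longleftrightarrow> bij_betw f U V \<and> (\<forall>x\<in>U. \<forall>y\<in>U. bdist (f x) (f y) = bdist x y)"

end

theory Submission
  imports Defs
begin

lemma symdiff_loc: "abstract_boolean_algebra_sym_diff inf sup uminus (bot::'a::boolean_algebra) top symdiff"
  apply (unfold_locales)
  apply (simp add: symdiff_def diff_eq inf_commute)
  done

lemma sd_assoc: "((x::'a::boolean_algebra) \<triangle> y) \<triangle> z = x \<triangle> (y \<triangle> z)"
  proof -
  interpret X: abstract_boolean_algebra_sym_diff inf sup uminus "bot::'a" top symdiff by (rule symdiff_loc)
  show ?thesis by (rule X.xor.assoc)
qed
lemma sd_comm: "((x::'a::boolean_algebra) \<triangle> y) = y \<triangle> x"
  proof -
  interpret X: abstract_boolean_algebra_sym_diff inf sup uminus "bot::'a" top symdiff by (rule symdiff_loc)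
  show ?thesis by (rule X.xor.commute)
qed
lemma sd_left_self: "(x::'a::boolean_algebra) \<triangle> (x \<triangle> y) = y"
  using abstract_boolean_algebra_sym_diff.xor_left_self[OF symdiff_loc] by blast
lemma sd_self: "(x::'a::boolean_algebra) \<triangle> x = bot"
  using abstract_boolean_algebra_sym_diff.xor_self[OF symdiff_loc] by blast

lemma transl_iso: "bool_isometry (\<lambda>x. (a::'a::boolean_algebra) \<triangle> x) UNIV UNIV"
proof -
  have "bij (\<lambda>x. a \<triangle> x)"
    by (rule o_bij[of "\<lambda>x. a \<triangle> x"]) (auto simp: sd_left_self)
  moreover have "bdist (a \<triangle> x) (a \<triangle> y) = bdist x y" for x y
    unfolding bdist_def by (metis sd_assoc sd_comm sd_left_self)
  ultimately show ?thesis unfolding bool_isometry_def by auto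
qed

theorem mainTheorem14:
  fixes U V :: "'a::boolean_algebra set" and f :: "'a \<Rightarrow> 'a"
  assumes "bool_isometry f U V"
  shows "\<exists>a::'a. bool_isometry (\<lambda>x. a \<triangle> x) UNIV UNIV \<and> (\<forall>x\<in>U. a \<triangle> x = f x)"
proof (cases "U = {}")
  case True then show ?thesis using transl_iso by blast
next
  case False
  then obtain u where u: "u \<in> U" by blast
  have iso: "\<forall>x\<in>U. f x \<triangle> f u = x \<triangle> u"
    using assms u unfolding bool_isometry_def bdist_def by blast
  have "(f u \<triangle> u) \<triangle> x = f x" if "x \<in> U" for x
  proof -
    have "(f u \<triangle> u) \<triangle> x = f u \<triangle> (x \<triangle> u)" by (metis sd_assoc sd_comm)
    also have "\<dots> = f u \<triangle> (f x \<triangle> f u)" using iso that by simp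
    also have "\<dots> = f x" by (metis sd_comm sd_left_self)
    finally show ?thesis .
  qed
  then show ?thesis using transl_iso by blast
qed

end
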